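(* Let $n\ge1$ and let $X$ be a vector field on $(\mathbf{R}^3)^n$ such that each component $X_j$, $j=1,\ldots,n$, is a (real) linear combination of cross products $p_i\times p_k$ of the variables $p_1,\ldots,p_n\in\mathbf{R}^3$. Let $Y=\nabla f^X$. Then $\nabla f^Y=3Y$.
   Context: For a vector field $Z$ on $(\mathbf{R}^3)^n$ with components $Z_1,\ldots,Z_n$, $f^Z$ denotes the real-valued function $f^Z(p)=Z_p\cdot p=\sum_{i=1}^n Z_i(p)\cdot p_i$ for $p=(p_1,\ldots,p_n)$; $\nabla$ is the Euclidean gradient on $(\mathbf{R}^3)^n=\mathbf{R}^{3n}$. *)

theory Defs
  imports "HOL-Analysis.Analysis"
begin

text \<open>Points of (R^3)^n are elements of real^3^'n, the index type 'n having n elements.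
  For a vector field Z on (R^3)^n, fZ Z p = sum_i Z_i(p) . p_i.\<close>

definition fZ :: "(real^3^'n::finite \<Rightarrow> real^3^'n) \<Rightarrow> real^3^'n \<Rightarrow> real" where
  "fZ Z p = (\<Sum>i\<in>UNIV. (Z p $ i) \<bullet> (p $ i))"

end

theory Submission
  imports Defs
begin

theorem proposition4p4:
  fixes c :: "'n::finite \<Rightarrow> 'n \<Rightarrow> 'n \<Rightarrow> real"
    and X Y :: "real^3^'n \<Rightarrow> real^3^'n"
  assumes X_def: "\<And>p. X p = (\<chi> j. \<Sum>i\<in>UNIV. \<Sum>k\<in>UNIV. c j i k *\<^sub>R cross3 (p $ i) (p $ k))"
    and Y_grad: "\<And>p. GDERIV (fZ X) p :> Y p"
  shows "\<forall>p. GDERIV (fZ Y) p :> (3::real) *\<^sub>R Y p"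
proof -
  have hom: "fZ X (t *\<^sub>R p) = t^3 * fZ X p" for t p
  proof -
    have "X (t *\<^sub>R p) = (t^2) *\<^sub>R X p"
      unfolding X_def by (simp add: vec_eq_iff cross_mult_left cross_mult_right
          scaleR_sum_right power2_eq_square mult_ac)
    then show ?thesis
      by (simp add: fZ_def sum_distrib_left power3_eq_cube power2_eq_square mult.assoc)
  qed
  have key: "fZ Y p = 3 * fZ X p" for p
  proof -
    have d1: "((\<lambda>t. fZ X (t *\<^sub>R p)) has_derivative (\<lambda>t. inner (t *\<^sub>R p) (Y p))) (at 1)"
    proof -
      have a: "((\<lambda>t::real. t *\<^sub>R p) has_derivative (\<lambda>t. t *\<^sub>R p)) (at 1)"
        by (auto intro!: derivative_eq_intros)
      have b: "(fZ X has_derivative (\<lambda>h. inner h (Y p))) (at (1 *\<^sub>R p))"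
        using Y_grad[of p] unfolding gderiv_def by simp
      show ?thesis using has_derivative_compose[OF a b] by (simp add: o_def)
    qed
    have d1': "((\<lambda>t. fZ X (t *\<^sub>R p)) has_real_derivative (inner p (Y p))) (at 1)"
      unfolding has_field_derivative_def
      using d1 by (simp add: mult.commute[of _ "p \<bullet> Y p"])
    have d2: "((\<lambda>t. fZ X (t *\<^sub>R p)) has_real_derivative (3 * fZ X p)) (at 1)"
      unfolding hom
      by (auto intro!: derivative_eq_intros)
    have "inner p (Y p) = 3 * fZ X p" using DERIV_unique[OF d1' d2] .
    moreover have "fZ Y p = inner p (Y p)"
      by (simp add: fZ_def inner_vec_def inner_commute mult.commute)
    ultimately show ?thesis by simp
  qed
  show ?thesis
  proof
    fix p
    have "((\<lambda>q. 3 * fZ X q) has_derivative (\<lambda>h. 3 * inner h (Y p))) (at p)"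
      using has_derivative_mult_right[OF Y_grad[of p, unfolded gderiv_def]] .
    moreover have "fZ Y = (\<lambda>q. 3 * fZ X q)" using key by auto
    ultimately show "GDERIV (fZ Y) p :> (3::real) *\<^sub>R Y p"
      unfolding gderiv_def by simp
  qed
qed

end
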